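(* Every finite graph is isomorphic to an induced subgraph of the enhanced power graph of some finite group, and this group can be taken to be abelian.
   Context: The enhanced power graph of a group $G$ has vertex set $G$, distinct $x,y$ adjacent iff $\langle x,y\rangle$ is cyclic. *)

theory Defs
  imports "HOL-Algebra.Elementary_Groups"
begin

definition simple_graph :: "'v set \<Rightarrow> ('v \<Rightarrow> 'v \<Rightarrow> bool) \<Rightarrow> bool" where
  "simple_graph V E \<longleftrightarrow> (\<forall>u v. E u v \<longrightarrow> u \<in> V \<and> v \<in> V \<and> u \<noteq> v \<and> E v u)"

definition enh_power_adj :: "('a, 'b) monoid_scheme \<Rightarrow> 'a \<Rightarrow> 'a \<Rightarrow> bool" where
  "enh_power_adj G x y \<longleftrightarrow>
     x \<in> carrier G \<and> y \<in> carrier G \<and> x \<noteq> y \<and> cyclic_group (subgroup_generated G {x, y})"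

definition induced_subgraph_of_enh_power_graph ::
  "'v set \<Rightarrow> ('v \<Rightarrow> 'v \<Rightarrow> bool) \<Rightarrow> ('a, 'b) monoid_scheme \<Rightarrow> bool" where
  "induced_subgraph_of_enh_power_graph V E G \<longleftrightarrow>
     (\<exists>f. f ` V \<subseteq> carrier G \<and> inj_on f V \<and>
          (\<forall>u\<in>V. \<forall>v\<in>V. E u v \<longleftrightarrow> enh_power_adj G (f u) (f v)))"

end

theory Submission imports Defs "HOL-Number_Theory.Number_Theory" begin

definition Zsq :: "nat \<Rightarrow> nat monoid" where
 "Zsq M = \<lparr>carrier = {..<M*M},
    monoid.mult = (\<lambda>x y. ((x div M + y div M) mod M) * M + (x mod M + y mod M) mod M), one = 0\<rparr>"

lemma enc_div: "b < (M::nat) \<Longrightarrow> (a*M+b) div M = a" by simp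
lemma enc_mod: "b < (M::nat) \<Longrightarrow> (a*M+b) mod M = b" by simp
lemma enc_lt: "a < (M::nat) \<Longrightarrow> b < M \<Longrightarrow> a*M+b < M*M"
proof -
  assume "a < M" "b < M"
  then have "a*M + b < a*M + M" by simp
  also have "\<dots> = (a+1)*M" by simp
  also have "\<dots> \<le> M*M" using \<open>a<M\<close> by (metis Suc_eq_plus1 Suc_leI mult_le_mono1)
  finally show ?thesis .
qed

lemma Zsq_simps: "carrier (Zsq M) = {..<M*M}" "\<one>\<^bsub>Zsq M\<^esub> = 0"
  "x \<otimes>\<^bsub>Zsq M\<^esub> y = ((x div M + y div M) mod M) * M + (x mod M + y mod M) mod M"
  by (simp_all add: Zsq_def)

lemma Zsq_comm_group: assumes "M > 0" shows "comm_group (Zsq M)"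
proof (rule comm_groupI)
  fix x y z assume x: "x \<in> carrier (Zsq M)" and y: "y \<in> carrier (Zsq M)" and z: "z \<in> carrier (Zsq M)"
  show "x \<otimes>\<^bsub>Zsq M\<^esub> y \<in> carrier (Zsq M)" using assms by (simp add: Zsq_simps enc_lt)
  show "x \<otimes>\<^bsub>Zsq M\<^esub> y = y \<otimes>\<^bsub>Zsq M\<^esub> x" by (simp add: Zsq_simps add.commute)
  show "(x \<otimes>\<^bsub>Zsq M\<^esub> y) \<otimes>\<^bsub>Zsq M\<^esub> z = x \<otimes>\<^bsub>Zsq M\<^esub> (y \<otimes>\<^bsub>Zsq M\<^esub> z)"
    using assms by (simp add: Zsq_simps enc_div enc_mod mod_add_left_eq mod_add_right_eq add.assoc)
next
  show "\<one>\<^bsub>Zsq M\<^esub> \<in> carrier (Zsq M)" using assms by (simp add: Zsq_simps)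
next
  fix x assume x: "x \<in> carrier (Zsq M)"
  then have "x div M < M" by (simp add: Zsq_simps less_mult_imp_div_less)
  then show "\<one>\<^bsub>Zsq M\<^esub> \<otimes>\<^bsub>Zsq M\<^esub> x = x" using assms by (simp add: Zsq_simps)
next
  fix x assume x: "x \<in> carrier (Zsq M)"
  then have xd: "x div M < M" by (simp add: Zsq_simps less_mult_imp_div_less)
  define y where "y = ((M - x div M) mod M) * M + (M - x mod M) mod M"
  have "y \<in> carrier (Zsq M)" using assms unfolding y_def by (simp add: Zsq_simps enc_lt)
  moreover have "y \<otimes>\<^bsub>Zsq M\<^esub> x = \<one>\<^bsub>Zsq M\<^esub>"
    using assms xd unfolding y_def by (simp add: Zsq_simps mod_add_left_eq)
  ultimately show "\<exists>y\<in>carrier (Zsq M). y \<otimes>\<^bsub>Zsq M\<^esub> x = \<one>\<^bsub>Zsq M\<^esub>" by blast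
qed

lemma Zsq_carrier_dm: "x \<in> carrier (Zsq M) \<Longrightarrow> x div M < M"
  by (simp add: Zsq_simps less_mult_imp_div_less)

lemma Zsq_pow: assumes "M > 0" "x \<in> carrier (Zsq M)"
  shows "x [^]\<^bsub>Zsq M\<^esub> (n::nat) = ((n * (x div M)) mod M) * M + (n * (x mod M)) mod M"
proof (induction n)
  case 0 then show ?case by (simp add: Zsq_simps)
next
  case (Suc n)
  have "x [^]\<^bsub>Zsq M\<^esub> Suc n = x [^]\<^bsub>Zsq M\<^esub> n \<otimes>\<^bsub>Zsq M\<^esub> x" by simp
  also have "\<dots> = ((Suc n * (x div M)) mod M) * M + (Suc n * (x mod M)) mod M"
    unfolding Suc using assms
    by (simp add: Zsq_simps mod_add_left_eq mod_add_right_eq add.commute)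
  finally show ?case .
qed

lemma Zsq_pow_M: assumes "M > 0" "x \<in> carrier (Zsq M)"
  shows "x [^]\<^bsub>Zsq M\<^esub> M = \<one>\<^bsub>Zsq M\<^esub>"
  using assms by (simp add: Zsq_pow Zsq_simps)

lemma (in group) int_pow_reduce:
  assumes "x \<in> carrier G" "x [^] (n::nat) = \<one>" "n > 0"
  shows "x [^] (k::int) = x [^] (nat (k mod int n))"
proof -
  have "k = k mod int n + int n * (k div int n)" by simp
  then have "x [^] k = x [^] (k mod int n) \<otimes> x [^] (int n * (k div int n))"
    by (metis assms(1) int_pow_mult)
  also have "x [^] (int n * (k div int n)) = (x [^] (int n)) [^] (k div int n)"
    using assms(1) by (simp add: int_pow_pow)
  also have "\<dots> = \<one>" using assms by (simp add: int_pow_int)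
  also have "x [^] (k mod int n) = x [^] (nat (k mod int n))"
    using assms by (metis int_pow_int mod_int_pos_iff of_nat_0_less_iff nat_0_le)
  finally show ?thesis using assms by simp
qed

lemma (in group) subgroup_nat_pow_closed':
  "subgroup H G \<Longrightarrow> h \<in> H \<Longrightarrow> h [^] (n::nat) \<in> H"
  using subgroup_int_pow_closed[of H h "int n"] by (simp add: int_pow_int)

lemma (in group) cyclic_sufficient:
  assumes x: "x \<in> carrier G" and y: "y \<in> carrier G" and g: "g \<in> carrier G"
    and "x = g [^] (k1::nat)" "y = g [^] (k2::nat)" "g = x [^] (s::nat) \<otimes> y [^] (t::nat)"
  shows "cyclic_group (subgroup_generated G {x, y})"
proof -
  have sg: "subgroup (generate G {g}) G" "subgroup (generate G {x,y}) G"
    using g x y by (auto intro: generate_is_subgroup)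
  have gg: "g \<in> generate G {g}" by (simp add: generate.incl)
  have "x \<in> generate G {g}" "y \<in> generate G {g}"
    using subgroup_nat_pow_closed'[OF sg(1) gg, of k1] subgroup_nat_pow_closed'[OF sg(1) gg, of k2] assms(4,5)
    by simp_all
  then have 1: "generate G {x,y} \<subseteq> generate G {g}"
    using sg by (intro generate_subgroup_incl) auto
  have "x \<in> generate G {x,y}" "y \<in> generate G {x,y}" by (auto intro: generate.incl)
  then have "x [^] s \<otimes> y [^] t \<in> generate G {x,y}" using sg
    by (simp add: subgroup.m_closed subgroup_nat_pow_closed')
  then have "g \<in> generate G {x,y}" using assms(6) by simp
  then have 2: "generate G {g} \<subseteq> generate G {x,y}"
    using sg by (intro generate_subgroup_incl) auto
  have "subgroup_generated G {x,y} = subgroup_generated G {g}"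
    using 1 2 x y g unfolding subgroup_generated_def by (simp add: Int_absorb1)
  then show ?thesis by (simp add: cyclic_group_generated)
qed

lemma Zsq_cyclic_necessary:
  assumes M: "M > 0" and x: "x \<in> carrier (Zsq M)" and y: "y \<in> carrier (Zsq M)"
    and cyc: "cyclic_group (subgroup_generated (Zsq M) {x, y})"
  shows "(x div M) * (y mod M) mod M = (y div M) * (x mod M) mod M"
proof -
  let ?G = "Zsq M"
  let ?H = "subgroup_generated ?G {x,y}"
  interpret G: comm_group ?G using Zsq_comm_group[OF M] .
  interpret H: group ?H by (rule G.group_subgroup_generated)
  obtain g where g: "g \<in> carrier ?H" and cH: "carrier ?H = range (\<lambda>n::int. g [^]\<^bsub>?H\<^esub> n)"
    using cyc H.cyclic_group by blast
  have gG: "g \<in> carrier ?G" using g G.carrier_subgroup_generated_subset by blast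
  have xH: "x \<in> carrier ?H" "y \<in> carrier ?H"
    using x y by (auto simp: carrier_subgroup_generated intro: generate.incl)
  obtain k1 k2 :: int where "x = g [^]\<^bsub>?H\<^esub> k1" "y = g [^]\<^bsub>?H\<^esub> k2"
    using xH cH by blast
  then have "x = g [^]\<^bsub>?G\<^esub> k1" "y = g [^]\<^bsub>?G\<^esub> k2"
    using G.int_pow_subgroup_generated g by auto
  then have "x = g [^]\<^bsub>?G\<^esub> (nat (k1 mod int M))" "y = g [^]\<^bsub>?G\<^esub> (nat (k2 mod int M))"
    using G.int_pow_reduce[OF gG Zsq_pow_M[OF M gG] M] by auto
  then obtain n1 n2 :: nat where "x = g [^]\<^bsub>?G\<^esub> n1" "y = g [^]\<^bsub>?G\<^esub> n2" by blast
  then have ex: "x div M = (n1 * (g div M)) mod M" "x mod M = (n1 * (g mod M)) mod M"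
    and ey: "y div M = (n2 * (g div M)) mod M" "y mod M = (n2 * (g mod M)) mod M"
    using Zsq_pow[OF M gG] M by simp_all
  show ?thesis unfolding ex ey
    by (simp only: mod_mult_eq) (simp add: mult_ac)
qed

lemma cong01_mult:
  fixes x y z q :: nat
  assumes "[x = of_bool P] (mod q)" "[y = of_bool Q] (mod q)" "[z = of_bool R] (mod q)" "P \<and> Q \<longleftrightarrow> R"
  shows "[x * y = z] (mod q)"
proof -
  have "[x * y = of_bool P * of_bool Q] (mod q)" using assms(1,2) by (rule cong_mult)
  moreover have "of_bool P * of_bool Q = (of_bool R :: nat)" using assms(4) by auto
  ultimately show ?thesis using assms(3) by (metis cong_sym cong_trans)
qed

lemma cong01_addmult:
  fixes x y z w q :: nat
  assumes "[x = of_bool P] (mod q)" "[y = of_bool Q] (mod q)" "[z = of_bool R] (mod q)"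
    "[w = of_bool S] (mod q)" "of_bool P + of_bool Q * of_bool R = (of_bool S :: nat)"
  shows "[x + y * z = w] (mod q)"
proof -
  have "[x + y * z = of_bool P + of_bool Q * of_bool R] (mod q)"
    using assms(1,2,3) by (intro cong_add cong_mult)
  then show ?thesis using assms(4,5) by (metis cong_sym cong_trans)
qed

lemma not_cong_1_0: "prime (p::nat) \<Longrightarrow> \<not> [1 = 0] (mod p)"
  using prime_gt_1_nat by (auto simp: cong_def)

lemma prime_family:
  assumes "finite (I :: 'i set)"
  shows "\<exists>m. inj_on m I \<and> (\<forall>i\<in>I. prime (m i :: nat))"
proof -
  obtain B where B: "B \<subseteq> {p::nat. prime p}" "finite B" "card B = card I"
    using infinite_arbitrarily_large[OF primes_infinite] by blast
  obtain h where "bij_betw h I B" using finite_same_card_bij[OF assms B(2) B(3)[symmetric]] by blast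
  then show ?thesis using B(1) by (auto simp: bij_betw_def)
qed

theorem mainTheorem10:
  fixes V :: "'v set" and E :: "'v \<Rightarrow> 'v \<Rightarrow> bool"
  assumes "finite V" and "simple_graph V E"
  shows "\<exists>G :: nat monoid. group G \<and> comm_group G \<and> finite (carrier G) \<and>
           induced_subgraph_of_enh_power_graph V E G"
proof -
  have sg: "\<And>u v. E u v \<Longrightarrow> u \<in> V \<and> v \<in> V \<and> u \<noteq> v \<and> E v u"
    using assms(2) unfolding simple_graph_def by blast
  define NE where "NE = {(a,b). a \<in> V \<and> b \<in> V \<and> a \<noteq> b \<and> \<not> E a b}"
  define I where "I = Inl ` V \<union> Inr ` NE"
  have finNE: "finite NE"
    by (rule finite_subset[of _ "V \<times> V"]) (auto simp: NE_def assms(1))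
  have finI: "finite I" unfolding I_def using finNE assms(1) by simp
  obtain m :: "'v + 'v \<times> 'v \<Rightarrow> nat" where m_inj: "inj_on m I" and m_prime: "\<And>i. i \<in> I \<Longrightarrow> prime (m i)"
    using prime_family[OF finI] by blast
  have cop: "\<forall>i\<in>I. \<forall>j\<in>I. i \<noteq> j \<longrightarrow> coprime (m i) (m j)"
    using m_inj m_prime by (metis inj_on_def primes_coprime)
  define M where "M = (\<Prod>i\<in>I. m i)"
  have Mpos: "M > 0" unfolding M_def using m_prime finI
    by (metis prime_gt_0_nat prod_pos)
  have mdvd: "\<And>i. i \<in> I \<Longrightarrow> m i dvd M" unfolding M_def using finI by (rule dvd_prodI)
  have lift: "a mod M = b mod M" if "\<And>i. i \<in> I \<Longrightarrow> [a = b] (mod m i)" for a b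
    using coprime_cong_prod_nat[of I m a b] cop that unfolding M_def cong_def by blast
  have down: "[a = b] (mod m i)" if "a mod M = b mod M" "i \<in> I" for a b i
    using cong_dvd_modulus_nat[of a b M "m i"] that mdvd unfolding cong_def by blast
  have chi_ex: "\<exists>x. x < M \<and> (\<forall>i\<in>I. [x = of_bool (P i)] (mod m i))" for P :: "'v + 'v \<times> 'v \<Rightarrow> bool"
  proof -
    obtain x where x: "\<forall>i\<in>I. [x = of_bool (P i)] (mod m i)"
      using chinese_remainder_nat[OF finI cop, of "\<lambda>i. of_bool (P i)"] by blast
    have "\<forall>i\<in>I. [x mod M = of_bool (P i)] (mod m i)"
      using x down by (metis cong_def mod_mod_trivial cong_trans)
    then show ?thesis using Mpos by (intro exI[of _ "x mod M"]) auto
  qed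
  define chi where "chi P = (SOME x. x < M \<and> (\<forall>i\<in>I. [x = of_bool (P i)] (mod m i)))"
    for P :: "'v + 'v \<times> 'v \<Rightarrow> bool"
  have chi: "chi P < M" "\<And>i. i \<in> I \<Longrightarrow> [chi P = of_bool (P i)] (mod m i)" for P
    using someI_ex[OF chi_ex[of P]] unfolding chi_def by blast+
  define \<alpha> :: "'v + 'v \<times> 'v \<Rightarrow> 'v \<Rightarrow> bool" where "\<alpha> i u = (case i of Inl w \<Rightarrow> u = w | Inr ab \<Rightarrow> u = fst ab)" for i u
  define \<beta> :: "'v + 'v \<times> 'v \<Rightarrow> 'v \<Rightarrow> bool" where "\<beta> i u = (case i of Inl w \<Rightarrow> False | Inr ab \<Rightarrow> u = snd ab)" for i u
  define A where "A u = chi (\<lambda>i. \<alpha> i u)" for u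
  define B where "B u = chi (\<lambda>i. \<beta> i u)" for u
  define f where "f u = A u * M + B u" for u
  let ?G = "Zsq M"
  interpret G: comm_group ?G using Zsq_comm_group[OF Mpos] .
  have fC: "f u \<in> carrier ?G" for u
    unfolding f_def A_def B_def using chi Mpos by (simp add: Zsq_simps enc_lt)
  have fdiv: "f u div M = A u" "f u mod M = B u" for u
    unfolding f_def B_def using chi(1)[of "\<lambda>i. \<beta> i u"] by auto
  have Iin: "Inl u \<in> I" if "u \<in> V" for u using that unfolding I_def by auto
  have finj: "inj_on f V"
  proof (rule inj_onI)
    fix u v assume uv: "u \<in> V" "v \<in> V" "f u = f v"
    show "u = v"
    proof (rule ccontr)
      assume ne: "u \<noteq> v"
      have "A u = A v" using uv fdiv by metis
      moreover have "[A u = 1] (mod m (Inl u))" "[A v = 0] (mod m (Inl u))"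
        using chi(2)[OF Iin[OF uv(1)], of "\<lambda>i. \<alpha> i u"] chi(2)[OF Iin[OF uv(1)], of "\<lambda>i. \<alpha> i v"] ne
        unfolding A_def by (auto simp: \<alpha>_def)
      ultimately show False using not_cong_1_0[OF m_prime[OF Iin[OF uv(1)]]]
        by (metis cong_sym cong_trans)
    qed
  qed
  have adj: "E u v \<longleftrightarrow> enh_power_adj ?G (f u) (f v)" if uV: "u \<in> V" "v \<in> V" for u v
  proof
    assume e: "E u v"
    then have ne: "u \<noteq> v" and evu: "E v u" using sg by auto
    have fne: "f u \<noteq> f v" using finj ne uV by (auto simp: inj_on_def)
    define GA where "GA = chi (\<lambda>i. \<alpha> i u \<or> \<alpha> i v)"
    define GB where "GB = chi (\<lambda>i. \<beta> i u \<or> \<beta> i v)"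
    define g where "g = GA * M + GB"
    define k1 where "k1 = chi (\<lambda>i. \<alpha> i u \<or> \<beta> i u)"
    define k2 where "k2 = chi (\<lambda>i. \<alpha> i v \<or> \<beta> i v)"
    define t where "t = chi (\<lambda>i. \<not> (\<alpha> i u \<or> \<beta> i u))"
    have gC: "g \<in> carrier ?G" unfolding g_def GA_def GB_def using chi Mpos by (simp add: Zsq_simps enc_lt)
    have gdiv: "g div M = GA" "g mod M = GB" unfolding g_def GB_def using chi(1)[of "\<lambda>i. \<beta> i u \<or> \<beta> i v"] by auto
    have ex: "\<And>i w. i \<in> I \<Longrightarrow> \<not> (\<alpha> i w \<and> \<beta> i w)"
      unfolding I_def NE_def \<alpha>_def \<beta>_def by auto
    have noUV: "\<And>i. i \<in> I \<Longrightarrow> \<not> (\<alpha> i u \<and> \<beta> i v)"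
      using e unfolding I_def NE_def \<alpha>_def \<beta>_def by auto
    have noVU: "\<And>i. i \<in> I \<Longrightarrow> \<not> (\<alpha> i v \<and> \<beta> i u)"
      using evu unfolding I_def NE_def \<alpha>_def \<beta>_def by auto
    have pw: "\<And>a b. (\<And>i. i \<in> I \<Longrightarrow> [a = b] (mod m i)) \<Longrightarrow> a < M \<Longrightarrow> b < M \<Longrightarrow> a = b"
      using lift by (metis mod_less)
    have "k1 * GA mod M = A u"
    proof -
      have "k1 * GA mod M = A u mod M"
        by (rule lift, unfold k1_def GA_def A_def, rule cong01_mult[OF chi(2) chi(2) chi(2)])
           (use noVU ex in auto)
      then show ?thesis using chi unfolding A_def by simp
    qed
    moreover have "k1 * GB mod M = B u"
    proof -
      have "k1 * GB mod M = B u mod M"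
        by (rule lift, unfold k1_def GB_def B_def, rule cong01_mult[OF chi(2) chi(2) chi(2)])
           (use noUV ex in auto)
      then show ?thesis using chi unfolding B_def by simp
    qed
    ultimately have xu: "f u = g [^]\<^bsub>?G\<^esub> k1"
      using Zsq_pow[OF Mpos gC, of k1] gdiv fdiv f_def by simp
    have "k2 * GA mod M = A v"
    proof -
      have "k2 * GA mod M = A v mod M"
        by (rule lift, unfold k2_def GA_def A_def, rule cong01_mult[OF chi(2) chi(2) chi(2)])
           (use noUV ex in auto)
      then show ?thesis using chi unfolding A_def by simp
    qed
    moreover have "k2 * GB mod M = B v"
    proof -
      have "k2 * GB mod M = B v mod M"
        by (rule lift, unfold k2_def GB_def B_def, rule cong01_mult[OF chi(2) chi(2) chi(2)])
           (use noVU ex in auto)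
      then show ?thesis using chi unfolding B_def by simp
    qed
    ultimately have xv: "f v = g [^]\<^bsub>?G\<^esub> k2"
      using Zsq_pow[OF Mpos gC, of k2] gdiv fdiv f_def by simp
    have "(A u + t * A v) mod M = GA"
    proof -
      have "(A u + t * A v) mod M = GA mod M"
        by (rule lift, unfold t_def GA_def A_def, rule cong01_addmult[OF chi(2) chi(2) chi(2) chi(2)])
           (use noVU ex in auto)
      then show ?thesis using chi unfolding GA_def by simp
    qed
    moreover have "(B u + t * B v) mod M = GB"
    proof -
      have "(B u + t * B v) mod M = GB mod M"
        by (rule lift, unfold t_def GB_def B_def, rule cong01_addmult[OF chi(2) chi(2) chi(2) chi(2)])
           (use noUV ex in auto)
      then show ?thesis using chi unfolding GB_def by simp
    qed
    ultimately have "g = f u [^]\<^bsub>?G\<^esub> (1::nat) \<otimes>\<^bsub>?G\<^esub> f v [^]\<^bsub>?G\<^esub> t"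
      using Zsq_pow[OF Mpos fC[of v], of t] fdiv fC[of u] Mpos
      by (simp add: Zsq_simps g_def mod_add_right_eq mod_add_left_eq)
    then have "cyclic_group (subgroup_generated ?G {f u, f v})"
      using G.cyclic_sufficient[OF fC fC gC xu xv] by blast
    then show "enh_power_adj ?G (f u) (f v)" unfolding enh_power_adj_def using fC fne by blast
  next
    assume adj: "enh_power_adj ?G (f u) (f v)"
    show "E u v"
    proof (rule ccontr)
      assume ne: "\<not> E u v"
      have uv: "u \<noteq> v" using adj unfolding enh_power_adj_def by auto
      have iI: "Inr (u,v) \<in> I" using ne uv uV unfolding I_def NE_def by auto
      have "A u * B v mod M = A v * B u mod M"
        using Zsq_cyclic_necessary[OF Mpos fC fC, of u v] adj fdiv
        unfolding enh_power_adj_def by (simp add: mult.commute)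
      then have c: "[A u * B v = A v * B u] (mod m (Inr (u,v)))" using down iI by blast
      have "[A u * B v = 1] (mod m (Inr (u,v)))"
        unfolding A_def B_def
        by (rule cong01_mult[OF chi(2)[OF iI] chi(2)[OF iI], where R=True]) (auto simp: \<alpha>_def \<beta>_def)
      moreover have "[A v * B u = 0] (mod m (Inr (u,v)))"
        unfolding A_def B_def
        by (rule cong01_mult[OF chi(2)[OF iI] chi(2)[OF iI], where R=False]) (use uv in \<open>auto simp: \<alpha>_def \<beta>_def\<close>)
      ultimately show False using c not_cong_1_0[OF m_prime[OF iI]]
        by (metis cong_sym cong_trans)
    qed
  qed
  have "induced_subgraph_of_enh_power_graph V E ?G"
    unfolding induced_subgraph_of_enh_power_graph_def
    using fC finj adj by (intro exI[of _ f]) auto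
  moreover have "finite (carrier ?G)" by (simp add: Zsq_simps)
  ultimately show ?thesis using G.is_group G.comm_group_axioms by blast
qed

end
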